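(* Assume Hypotheses 1, 2 and 3 (see context). For any $x\in\Gamma$ and any $\mathbf{x}\in T(x)$, $$\|Q(t,x)\mathbf{x}\|\le 2\|\mathbf{x}\|\exp\Big(\int_0^t\big(\|D_ag(\Phi(s,x))\|+\ell(\Phi(s,x))\big)\,ds\Big)\quad\text{for all }t\ge0.$$
   Context: System $\dot x=F(x)$ with $F=(f,g)$, i.e. $\dot a=f(a,z)$, $\dot z=g(a,z)$, $(a,z)\in\mathbb{R}^n\times\mathbb{R}^m$, $X=\mathbb{R}^n\times\mathbb{R}^m$, flow $\Phi(t,x)$. Euclidean inner product, norm, operator norm. $\mathcal{L}(x_1,x_2)=\|a_2-a_1\|^2-\|z_2-z_1\|^2$, $\mathcal{C}(x)=\{x'\in X:\mathcal{L}(x',x)\ge0\}$, $\mathbf{0}$ the zero vector of $X$; $\Pi(a,z)=a$, $\Pi_\perp(a,z)=z$; $\mathbb{B}_d(x)=\{(a',z'):\|a'-a\|\le d,\|z'-z\|\le d\}$. $\Gamma\subseteq U$ positively invariant means $\Phi(t,x)$ is defined for all $t\ge0$ for $x\in\Gamma$ and $\Phi(t,\Gamma)\subseteq\Gamma$. Hypothesis 1: $U$ open and convex, and there is $d>0$ with $\mathcal{C}(x)\cap U\subset\mathbb{B}_d(x)$ for all $x\in U$. Hypothesis 2: $f,g$ are $C^1$ on $U$; there exist continuous $\alpha>0$, $\ell\ge0$ on $U$ and $c_1>0$ with, for all $x\in U$: $\langle a',D_af(x)a'\rangle\ge\alpha(x)\|a'\|^2$; $\langle z',D_zg(x)z'\rangle\le\ell(x)\|z'\|^2$;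 $\alpha(x)\ge\ell(x)+\|D_zf(x)\|+\|D_ag(x)\|+c_1$. Hypothesis 3: $\Gamma\subset U$ is positively invariant and $\Pi_\perp(\Gamma)=\Pi_\perp(U)$. For $x\in\Gamma$, $Q(t,x)$ ($t\ge0$) denotes the fundamental matrix solution of the variational equation $\dot{\mathbf{x}}=DF(\Phi(t,x))\mathbf{x}$ with $Q(0,x)=I$. For $x\in\Gamma$, $T(x):=\{\mathbf{x}\in X: \mathcal{L}(Q(t,x)\mathbf{x},\mathbf{0})\le0\text{ for all }t\ge0\}$, i.e. the set of $\mathbf{x}$ with $Q(t,x)\mathbf{x}\notin\operatorname{int}\mathcal{C}(\mathbf{0})$ for all $t\ge0$. *)

theory Defs
  imports "HOL-Analysis.Analysis"
begin

text \<open>Phase space X = R^n x R^m, modelled as the product 'a x 'b of two Euclidean spaces;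
  the norm/inner product on the product type is the Euclidean one.\<close>

definition lyapL :: "('a::real_normed_vector \<times> 'b::real_normed_vector) \<Rightarrow> ('a \<times> 'b) \<Rightarrow> real" where
  "lyapL x1 x2 = (norm (fst x2 - fst x1))\<^sup>2 - (norm (snd x2 - snd x1))\<^sup>2"

definition coneC :: "('a::real_normed_vector \<times> 'b::real_normed_vector) \<Rightarrow> ('a \<times> 'b) set" where
  "coneC x = {x'. lyapL x' x \<ge> 0}"

definition boxB :: "real \<Rightarrow> ('a::real_normed_vector \<times> 'b::real_normed_vector) \<Rightarrow> ('a \<times> 'b) set" where
  "boxB d x = {x'. norm (fst x' - fst x) \<le> d \<and> norm (snd x' - snd x) \<le> d}"

definition partA :: "(('a::real_normed_vector \<times> 'b::real_normed_vector) \<Rightarrow>\<^sub>L 'c::real_normed_vector) \<Rightarrow> 'a \<Rightarrow> 'c" where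
  "partA D = (\<lambda>a'. blinfun_apply D (a', 0))"

definition partZ :: "(('a::real_normed_vector \<times> 'b::real_normed_vector) \<Rightarrow>\<^sub>L 'c::real_normed_vector) \<Rightarrow> 'b \<Rightarrow> 'c" where
  "partZ D = (\<lambda>z'. blinfun_apply D (0, z'))"

text \<open>T(x): vectors whose image under the fundamental matrix never enters the interior of C(0).\<close>
definition Tset :: "(real \<Rightarrow> ('a::real_normed_vector \<times> 'b::real_normed_vector) \<Rightarrow> ('a \<times> 'b) \<Rightarrow> ('a \<times> 'b))
     \<Rightarrow> ('a \<times> 'b) \<Rightarrow> ('a \<times> 'b) set" where
  "Tset Q x = {v. \<forall>t\<ge>0. lyapL (Q t x v) 0 \<le> 0}"

end

theory Submission
  imports Defs
begin

theorem lemma2p6: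
  fixes f :: "'a::euclidean_space \<times> 'b::euclidean_space \<Rightarrow> 'a"
    and g :: "'a \<times> 'b \<Rightarrow> 'b"
    and Df :: "'a \<times> 'b \<Rightarrow> ('a \<times> 'b) \<Rightarrow>\<^sub>L 'a"
    and Dg :: "'a \<times> 'b \<Rightarrow> ('a \<times> 'b) \<Rightarrow>\<^sub>L 'b"
    and U \<Gamma> :: "('a \<times> 'b) set"
    and d c1 :: real
    and \<alpha> ell :: "'a \<times> 'b \<Rightarrow> real"
    and \<Phi> :: "real \<Rightarrow> 'a \<times> 'b \<Rightarrow> 'a \<times> 'b"
    and Q :: "real \<Rightarrow> 'a \<times> 'b \<Rightarrow> ('a \<times> 'b) \<Rightarrow> ('a \<times> 'b)"
  assumes H1_open: "open U" and H1_convex: "convex U"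
    and H1_d: "d > 0" and H1_cone: "\<forall>x\<in>U. coneC x \<inter> U \<subseteq> boxB d x"
    and H2_f: "\<forall>x\<in>U. (f has_derivative blinfun_apply (Df x)) (at x)"
    and H2_g: "\<forall>x\<in>U. (g has_derivative blinfun_apply (Dg x)) (at x)"
    and H2_Df_cont: "continuous_on U Df" and H2_Dg_cont: "continuous_on U Dg"
    and H2_alpha_cont: "continuous_on U \<alpha>" and H2_ell_cont: "continuous_on U ell"
    and H2_alpha_pos: "\<forall>x\<in>U. \<alpha> x > 0" and H2_ell_nonneg: "\<forall>x\<in>U. ell x \<ge> 0"
    and H2_c1: "c1 > 0"
    and H2_a: "\<forall>x\<in>U. \<forall>a'. inner a' (partA (Df x) a') \<ge> \<alpha> x * (norm a')\<^sup>2"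
    and H2_z: "\<forall>x\<in>U. \<forall>z'. inner z' (partZ (Dg x) z') \<le> ell x * (norm z')\<^sup>2"
    and H2_gap: "\<forall>x\<in>U. \<alpha> x \<ge> ell x + onorm (partZ (Df x)) + onorm (partA (Dg x)) + c1"
    and H3_sub: "\<Gamma> \<subseteq> U"
    and H3_flow0: "\<forall>x\<in>\<Gamma>. \<Phi> 0 x = x"
    and H3_flow: "\<forall>x\<in>\<Gamma>. \<forall>t\<ge>0. ((\<lambda>s. \<Phi> s x) has_vector_derivative
                     (f (\<Phi> t x), g (\<Phi> t x))) (at t within {0..})"
    and H3_inv: "\<forall>x\<in>\<Gamma>. \<forall>t\<ge>0. \<Phi> t x \<in> \<Gamma>"
    and H3_proj: "snd ` \<Gamma> = snd ` U"
    and Q0: "\<forall>x\<in>\<Gamma>. \<forall>v. Q 0 x v = v"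
    and Qvar: "\<forall>x\<in>\<Gamma>. \<forall>v. \<forall>t\<ge>0. ((\<lambda>s. Q s x v) has_vector_derivative
                 (blinfun_apply (Df (\<Phi> t x)) (Q t x v), blinfun_apply (Dg (\<Phi> t x)) (Q t x v)))
                 (at t within {0..})"
    and x_in: "x \<in> \<Gamma>"
    and v_in: "v \<in> Tset Q x"
    and t_nonneg: "t \<ge> 0"
  shows "norm (Q t x v) \<le> 2 * norm v *
           exp (integral {0..t} (\<lambda>s. onorm (partA (Dg (\<Phi> s x))) + ell (\<Phi> s x)))"
proof -
  define q where "q s = Q s x v" for s
  define a where "a s = fst (q s)" for s
  define z where "z s = snd (q s)" for s
  define y where "y s = \<Phi> s x" for s
  define k where "k s = onorm (partA (Dg (y s))) + ell (y s)" for s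
  define L :: "'a \<Rightarrow>\<^sub>L ('a \<times> 'b)" where "L = Blinfun (\<lambda>a. (a, 0))"
  have bl: "bounded_linear (\<lambda>a::'a. (a, 0::'b))"
    by (intro bounded_linear_Pair bounded_linear_ident bounded_linear_zero)
  have LL: "blinfun_apply L = (\<lambda>a. (a, 0))" unfolding L_def using bl by (simp add: bounded_linear_Blinfun_apply)
  have pA: "partA D = blinfun_apply (D o\<^sub>L L)" for D :: "('a \<times> 'b) \<Rightarrow>\<^sub>L 'b"
    unfolding partA_def by (auto simp: LL)
  have onA: "onorm (partA D) = norm (D o\<^sub>L L)" for D :: "('a \<times> 'b) \<Rightarrow>\<^sub>L 'b"
    unfolding pA by (simp add: norm_blinfun.rep_eq)
  have blA: "bounded_linear (partA D)" for D :: "('a \<times> 'b) \<Rightarrow>\<^sub>L 'b"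
    unfolding pA by (rule blinfun.bounded_linear_right)
  have yG: "y s \<in> \<Gamma>" if "s \<ge> 0" for s using H3_inv x_in that by (simp add: y_def)
  have yU: "y s \<in> U" if "s \<ge> 0" for s using yG[OF that] H3_sub by blast
  have cont_y: "continuous_on {0..} y"
    unfolding continuous_on_eq_continuous_within
  proof
    fix s :: real assume "s \<in> {0..}"
    then show "continuous (at s within {0..}) y"
      using H3_flow x_in unfolding y_def by (auto intro: has_vector_derivative_continuous)
  qed
  have cont_Dgy: "continuous_on {0..t} (\<lambda>s. Dg (y s))"
    by (rule continuous_on_compose2[OF H2_Dg_cont continuous_on_subset[OF cont_y]]) (auto intro: yU)
  have cont_elly: "continuous_on {0..t} (\<lambda>s. ell (y s))"
    by (rule continuous_on_compose2[OF H2_ell_cont continuous_on_subset[OF cont_y]]) (auto intro: yU)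
  have cont_k: "continuous_on {0..t} k"
    unfolding k_def onA
    by (intro continuous_intros cont_Dgy cont_elly)
  have qd: "(q has_vector_derivative (Df (y s) (q s), Dg (y s) (q s))) (at s within {0..})"
    if "s \<ge> 0" for s using Qvar x_in that unfolding q_def y_def by blast
  have zd: "(z has_vector_derivative Dg (y s) (q s)) (at s within {0..})" if "s \<ge> 0" for s
  proof -
    have "((\<lambda>s. snd (q s)) has_derivative (\<lambda>h. snd (h *\<^sub>R (Df (y s) (q s), Dg (y s) (q s))))) (at s within {0..})"
      using qd[OF that] unfolding has_vector_derivative_def by (rule has_derivative_snd)
    then show ?thesis unfolding has_vector_derivative_def z_def by simp
  qed
  define N where "N s = inner (z s) (z s)" for s
  define N' where "N' s = 2 * inner (z s) (Dg (y s) (q s))" for s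
  have Nd: "(N has_real_derivative N' s) (at s within {0..})" if "s \<ge> 0" for s
  proof -
    have "((\<lambda>s. inner (z s) (z s)) has_derivative
       (\<lambda>h. inner (z s) (h *\<^sub>R Dg (y s) (q s)) + inner (h *\<^sub>R Dg (y s) (q s)) (z s))) (at s within {0..})"
      using zd[OF that] unfolding has_vector_derivative_def by (intro has_derivative_inner) auto
    then show ?thesis unfolding has_field_derivative_def N_def N'_def
      apply (simp add: inner_commute algebra_simps)
      apply (erule has_derivative_eq_rhs)
      by (simp add: fun_eq_iff)
  qed
  have a_le: "norm (a s) \<le> norm (z s)" if "s \<ge> 0" for s
  proof -
    have "lyapL (q s) 0 \<le> 0" using v_in that unfolding Tset_def q_def by blast
    then have "(norm (a s))\<^sup>2 \<le> (norm (z s))\<^sup>2" unfolding lyapL_def a_def z_def by simp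
    then show ?thesis by (rule power2_le_imp_le) simp
  qed
  have N'le: "N' s \<le> 2 * k s * N s" if "s \<ge> 0" for s
  proof -
    define D where "D = Dg (y s)"
    have qs: "q s = (a s, 0) + (0, z s)" by (simp add: a_def z_def)
    have split: "blinfun_apply D (q s) = partA D (a s) + partZ D (z s)"
      unfolding partA_def partZ_def qs by (rule blinfun.add_right)
    have "inner (z s) (partA D (a s)) \<le> norm (z s) * norm (partA D (a s))"
      by (rule norm_cauchy_schwarz)
    also have "\<dots> \<le> norm (z s) * (onorm (partA D) * norm (a s))"
      by (rule mult_left_mono[OF onorm[OF blA] norm_ge_zero])
    also have "\<dots> \<le> norm (z s) * (onorm (partA D) * norm (z s))"
      by (rule mult_left_mono[OF mult_left_mono[OF a_le[OF that] onorm_pos_le[OF blA]] norm_ge_zero])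
    also have "\<dots> = onorm (partA D) * N s"
      by (simp add: N_def dot_square_norm power2_eq_square mult_ac)
    finally have i1: "inner (z s) (partA D (a s)) \<le> onorm (partA D) * N s" .
    have i2: "inner (z s) (partZ D (z s)) \<le> ell (y s) * N s"
      using H2_z yU[OF that] unfolding N_def D_def by (simp add: dot_square_norm)
    have e1: "N' s = 2 * inner (z s) (partA D (a s)) + 2 * inner (z s) (partZ D (z s))"
      unfolding N'_def D_def[symmetric] split inner_add_right by simp
    have e2: "2 * k s * N s = 2 * (onorm (partA D) * N s) + 2 * (ell (y s) * N s)"
      unfolding k_def D_def by (simp add: algebra_simps)
    show ?thesis unfolding e1 e2 using i1 i2 by linarith
  qed
  have nq: "(norm (q s))\<^sup>2 = (norm (a s))\<^sup>2 + (norm (z s))\<^sup>2" for s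
  proof -
    have "q s = (a s, z s)" by (simp add: a_def z_def)
    then show ?thesis by (simp add: norm_Pair)
  qed
  define K where "K s = integral {0..s} k" for s
  have Kd: "(K has_real_derivative k s) (at s within {0..t})" if "s \<in> {0..t}" for s
    unfolding K_def by (rule integral_has_real_derivative[OF cont_k that])
  define h where "h s = N s * exp (- 2 * K s)" for s
  define h' where "h' s = N' s * exp (- 2 * K s) + N s * (exp (- 2 * K s) * (- 2 * k s))" for s
  have hd: "(h has_vector_derivative h' s) (at s within {0..t})" if "s \<in> {0..t}" for s
  proof -
    have N1: "(N has_real_derivative N' s) (at s within {0..t})"
      using Nd[of s] that by (auto intro: DERIV_subset)
    have "(h has_real_derivative h' s) (at s within {0..t})"
    proof -
      have e1: "((\<lambda>s. - 2 * K s) has_real_derivative (- 2 * k s)) (at s within {0..t})"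
        using DERIV_cmult[OF Kd[OF that], of "-2"] by simp
      have e2: "((\<lambda>s. exp (- 2 * K s)) has_real_derivative exp (- 2 * K s) * (- 2 * k s)) (at s within {0..t})"
        using DERIV_chain2[OF DERIV_exp e1] by simp
      have "((\<lambda>s. N s * exp (- 2 * K s)) has_real_derivative
          N' s * exp (- 2 * K s) + exp (- 2 * K s) * (- 2 * k s) * N s) (at s within {0..t})"
        by (rule DERIV_mult[OF N1 e2])
      moreover have "h = (\<lambda>s. N s * exp (- 2 * K s))" by (rule ext) (simp add: h_def)
      ultimately show ?thesis by (simp add: h'_def algebra_simps)
    qed
    then show ?thesis by (simp add: has_real_derivative_iff_has_vector_derivative)
  qed
  have "(h' has_integral (h t - h 0)) {0..t}"
    by (rule fundamental_theorem_of_calculus[OF t_nonneg hd])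
  moreover have "h' s \<le> 0" if "s \<in> {0..t}" for s
  proof -
    have "h' s = (N' s - 2 * k s * N s) * exp (- 2 * K s)" by (simp add: h'_def algebra_simps)
    also have "\<dots> \<le> 0" using N'le[of s] that by (intro mult_nonpos_nonneg) auto
    finally show ?thesis .
  qed
  ultimately have "h t - h 0 \<le> 0"
    using has_integral_le[of h' "h t - h 0" "{0..t}" "\<lambda>_. 0" 0] by auto
  moreover have "h 0 = N 0"
  proof -
    have "K 0 = 0" by (simp add: K_def)
    then show ?thesis by (simp add: h_def)
  qed
  moreover have "N 0 \<le> (norm v)\<^sup>2"
  proof -
    have "q 0 = v" using Q0 x_in unfolding q_def by blast
    then have "(norm v)\<^sup>2 = (norm (a 0))\<^sup>2 + (norm (z 0))\<^sup>2"
      using nq[of 0] by simp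
    then show ?thesis by (simp add: N_def dot_square_norm)
  qed
  ultimately have "N t * exp (- 2 * K t) \<le> (norm v)\<^sup>2" unfolding h_def by linarith
  then have "N t \<le> (norm v)\<^sup>2 * exp (2 * K t)"
  proof -
    have "exp (- 2 * K t) * exp (2 * K t) = 1" by (simp add: exp_add[symmetric])
    have "N t = (N t * exp (- 2 * K t)) * exp (2 * K t)" by (simp add: exp_add[symmetric])
    also have "\<dots> \<le> (norm v)\<^sup>2 * exp (2 * K t)" using \<open>N t * exp (- 2 * K t) \<le> (norm v)\<^sup>2\<close>
      by (intro mult_right_mono) auto
    finally show ?thesis .
  qed
  moreover have "(norm v)\<^sup>2 * exp (2 * K t) = (norm v * exp (K t))\<^sup>2"
    by (simp add: power_mult_distrib power2_eq_square exp_add[symmetric])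
  ultimately have Nt: "(norm (z t))\<^sup>2 \<le> (norm v * exp (K t))\<^sup>2"
    by (simp add: N_def dot_square_norm)
  have "(norm (q t))\<^sup>2 = (norm (a t))\<^sup>2 + (norm (z t))\<^sup>2" by (rule nq)
  also have "\<dots> \<le> 2 * (norm (z t))\<^sup>2"
    using a_le[OF t_nonneg] by (simp add: power_mono)
  also have "\<dots> \<le> 4 * (norm v * exp (K t))\<^sup>2" using Nt zero_le_power2[of "norm v * exp (K t)"]
    by linarith
  also have "\<dots> = (2 * norm v * exp (K t))\<^sup>2" by (simp add: power_mult_distrib)
  finally have "norm (q t) \<le> 2 * norm v * exp (K t)"
    by (rule power2_le_imp_le) simp
  moreover have "k = (\<lambda>s. onorm (partA (Dg (\<Phi> s x))) + ell (\<Phi> s x))"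
    by (rule ext) (simp add: k_def y_def)
  ultimately show ?thesis by (simp add: q_def K_def)
qed

end
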